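(* Let $n\ge3$ and let $i,j,k,l\in\{1,\dots,n\}$ be pairwise distinct indices (whenever they occur). Then in $VP_n$: 1) if $\max\{i,j\}<\max\{k,l\}$ and $\varepsilon=\pm1$, then $\lambda_{kl}^{\lambda_{ij}^{\varepsilon}}=\lambda_{kl}$; 2) if $i<j<k$ or $j<i<k$: $\lambda_{ik}^{\lambda_{ij}}=\lambda_{kj}^{\lambda_{ij}}\lambda_{ik}\lambda_{kj}^{-1}$ and $\lambda_{ik}^{\lambda_{ij}^{-1}}=\lambda_{kj}^{-1}\lambda_{ik}\lambda_{kj}^{\lambda_{ij}^{-1}}$; 3) if $i<j<k$ or $j<i<k$: $\lambda_{ki}^{\lambda_{ij}}=\lambda_{kj}\lambda_{ki}\lambda_{kj}^{-\lambda_{ij}}$ and $\lambda_{ki}^{\lambda_{ij}^{-1}}=\lambda_{kj}^{-\lambda_{ij}^{-1}}\lambda_{ki}\lambda_{kj}$; 4) if $i<j<k$ or $j<i<k$: $\lambda_{jk}^{\lambda_{ij}}=\lambda_{ik}\lambda_{jk}\lambda_{kj}\lambda_{ik}^{-1}\lambda_{kj}^{-\lambda_{ij}}$ and $\lambda_{jk}^{\lambda_{ij}^{-1}}=\lambda_{kj}^{-\lambda_{ij}^{-1}}\lambda_{ik}^{-1}\lambda_{kj}\lambda_{jk}\lambda_{ik}$.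
   Context: Notation: $a^b=b^{-1}ab$, $a^{-b}=(a^b)^{-1}$. The virtual braid group $VB_n$ is the group with generators $\sigma_1,\dots,\sigma_{n-1},\rho_1,\dots,\rho_{n-1}$ and defining relations: $\sigma_i\sigma_{i+1}\sigma_i=\sigma_{i+1}\sigma_i\sigma_{i+1}$, $\sigma_i\sigma_j=\sigma_j\sigma_i$ ($|i-j|\ge2$); $\rho_i\rho_{i+1}\rho_i=\rho_{i+1}\rho_i\rho_{i+1}$, $\rho_i\rho_j=\rho_j\rho_i$ ($|i-j|\ge2$), $\rho_i^2=1$; $\sigma_i\rho_j=\rho_j\sigma_i$ ($|i-j|\ge2$), $\rho_i\rho_{i+1}\sigma_i=\sigma_{i+1}\rho_i\rho_{i+1}$. $VP_n$ is the kernel of the homomorphism $VB_n\to S_n$ sending $\sigma_i,\rho_i$ to $(i,i+1)$. Define $\lambda_{i,i+1}=\rho_i\sigma_i^{-1}$, $\lambda_{i+1,i}=\sigma_i^{-1}\rho_i$, and for $1\le i<j-1\le n-1$: $\lambda_{ij}=\rho_{j-1}\cdots\rho_{i+1}\lambda_{i,i+1}\rho_{i+1}\cdots\rho_{j-1}$, $\lambda_{ji}=\rho_{j-1}\cdots\rho_{i+1}\lambda_{i+1,i}\rho_{i+1}\cdots\rho_{j-1}$. *)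

theory Defs
  imports Main
begin

text \<open>Generators of the virtual braid group: S i stands for sigma_i, R i for rho_i.\<close>
datatype gen = S nat | R nat

text \<open>Words in the generators and their inverses: (g, False) is g, (g, True) is g inverse.\<close>
type_synonym word = "(gen \<times> bool) list"

definition winv :: "word \<Rightarrow> word" where
  "winv w = rev (map (\<lambda>(g, e). (g, \<not> e)) w)"

text \<open>Conjugation convention of the paper: a^b = b^{-1} a b.\<close>
definition wconj :: "word \<Rightarrow> word \<Rightarrow> word" where
  "wconj a b = winv b @ a @ b"

definition sg :: "nat \<Rightarrow> word" where "sg i = [(S i, False)]"
definition rh :: "nat \<Rightarrow> word" where "rh i = [(R i, False)]"

definition vb_rels :: "nat \<Rightarrow> (word \<times> word) set" where
  "vb_rels n =
     {(sg i @ sg (i+1) @ sg i, sg (i+1) @ sg i @ sg (i+1)) | i. 1 \<le> i \<and> i + 1 \<le> n - 1}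
   \<union> {(sg i @ sg j, sg j @ sg i) | i j. 1 \<le> i \<and> i \<le> n - 1 \<and> 1 \<le> j \<and> j \<le> n - 1 \<and> (i + 2 \<le> j \<or> j + 2 \<le> i)}
   \<union> {(rh i @ rh (i+1) @ rh i, rh (i+1) @ rh i @ rh (i+1)) | i. 1 \<le> i \<and> i + 1 \<le> n - 1}
   \<union> {(rh i @ rh j, rh j @ rh i) | i j. 1 \<le> i \<and> i \<le> n - 1 \<and> 1 \<le> j \<and> j \<le> n - 1 \<and> (i + 2 \<le> j \<or> j + 2 \<le> i)}
   \<union> {(rh i @ rh i, []) | i. 1 \<le> i \<and> i \<le> n - 1}
   \<union> {(sg i @ rh j, rh j @ sg i) | i j. 1 \<le> i \<and> i \<le> n - 1 \<and> 1 \<le> j \<and> j \<le> n - 1 \<and> (i + 2 \<le> j \<or> j + 2 \<le> i)}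
   \<union> {(rh i @ rh (i+1) @ sg i, sg (i+1) @ rh i @ rh (i+1)) | i. 1 \<le> i \<and> i + 1 \<le> n - 1}"

inductive vb_eq :: "nat \<Rightarrow> word \<Rightarrow> word \<Rightarrow> bool" where
  refl: "vb_eq n w w"
| sym: "vb_eq n u v \<Longrightarrow> vb_eq n v u"
| trans: "vb_eq n u v \<Longrightarrow> vb_eq n v w \<Longrightarrow> vb_eq n u w"
| cong: "vb_eq n u v \<Longrightarrow> vb_eq n (a @ u @ b) (a @ v @ b)"
| cancel: "vb_eq n [(g, e), (g, \<not> e)] []"
| rel: "(u, v) \<in> vb_rels n \<Longrightarrow> vb_eq n u v"

definition rhos_up :: "nat \<Rightarrow> nat \<Rightarrow> word" where
  "rhos_up a b = map (\<lambda>k. (R k, False)) [a..<b+1]"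

definition lam :: "nat \<Rightarrow> nat \<Rightarrow> word" where
  "lam i j =
    (if i < j then rev (rhos_up (i+1) (j-1)) @ rh i @ winv (sg i) @ rhos_up (i+1) (j-1)
     else rev (rhos_up (j+1) (i-1)) @ winv (sg j) @ rh j @ rhos_up (j+1) (i-1))"

end

theory Submission
  imports Defs
begin

lemma winv_Nil[simp]: "winv [] = []" by (simp add: winv_def)
lemma winv_append[simp]: "winv (u @ v) = winv v @ winv u" by (simp add: winv_def)
lemma winv_Cons[simp]: "winv ((g,e) # w) = winv w @ [(g, \<not> e)]" by (simp add: winv_def)
lemma winv_winv[simp]: "winv (winv w) = w"
  by (induction w) (auto simp: winv_def)

lemma E_app: "vb_eq n u u' \<Longrightarrow> vb_eq n v v' \<Longrightarrow> vb_eq n (u @ v) (u' @ v')"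
  by (metis vb_eq.trans vb_eq.cong append_Nil append_Nil2)

lemmas E_ctx = vb_eq.cong
lemmas E_trans[trans] = vb_eq.trans

lemma inv_r: "vb_eq n (w @ winv w) []"
proof (induction w)
  case Nil then show ?case by (simp add: vb_eq.refl)
next
  case (Cons x w)
  obtain g e where x: "x = (g,e)" by (cases x)
  have "vb_eq n ([(g,e)] @ (w @ winv w) @ [(g,\<not>e)]) ([(g,e)] @ [] @ [(g,\<not>e)])"
    by (rule E_ctx[OF Cons])
  also have "vb_eq n ([(g,e)] @ [] @ [(g,\<not>e)]) []" using vb_eq.cancel by simp
  finally show ?case by (simp add: x)
qed

lemma inv_l: "vb_eq n (winv w @ w) []"
  using inv_r[of n "winv w"] by simp

lemma del_r: "vb_eq n (a @ w @ winv w @ b) (a @ b)"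
  using E_ctx[OF inv_r[of n w], of a b] by simp
lemma del_l: "vb_eq n (a @ winv w @ w @ b) (a @ b)"
  using E_ctx[OF inv_l[of n w], of a b] by simp

lemma E_inv: assumes "vb_eq n u v" shows "vb_eq n (winv u) (winv v)"
proof -
  have "vb_eq n (winv u) (winv u @ v @ winv v)"
    using vb_eq.sym[OF del_r[of n "winv u" v "[]"]] by simp
  also have "vb_eq n (winv u @ v @ winv v) (winv u @ u @ winv v)"
    by (rule E_ctx[OF vb_eq.sym[OF assms]])
  also have "vb_eq n (winv u @ u @ winv v) (winv v)"
    using del_l[of n "[]" u "winv v"] by simp
  finally show ?thesis .
qed

lemma cancel_ctx: assumes "vb_eq n (a @ x @ b) (a @ y @ b)" shows "vb_eq n x y"
proof -
  have 1: "vb_eq n (winv a @ (a @ z @ b) @ winv b) z" for z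
  proof -
    have "vb_eq n (winv a @ (a @ z @ b) @ winv b) ([] @ z @ b @ winv b)"
      using del_l[of n "[]" a "z @ b @ winv b"] by simp
    also have "vb_eq n ([] @ z @ b @ winv b) z"
      using del_r[of n z b "[]"] by simp
    finally show ?thesis .
  qed
  have "vb_eq n x (winv a @ (a @ x @ b) @ winv b)" using vb_eq.sym[OF 1] .
  also have "vb_eq n (winv a @ (a @ x @ b) @ winv b) (winv a @ (a @ y @ b) @ winv b)"
    by (rule E_ctx[OF assms])
  also have "vb_eq n (winv a @ (a @ y @ b) @ winv b) y" by (rule 1)
  finally show ?thesis .
qed

lemma lcancel: "vb_eq n (a @ x) (a @ y) \<Longrightarrow> vb_eq n x y"
  using cancel_ctx[of n a x "[]" y] by simp
lemma rcancel: "vb_eq n (x @ b) (y @ b) \<Longrightarrow> vb_eq n x y"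
  using cancel_ctx[of n "[]" x b y] by simp

lemma G2a: assumes h: "vb_eq n (A@B@C) (C@B@A)"
  shows "vb_eq n (winv B @ A @ B) (winv B @ C @ B @ A @ winv C)"
proof -
  have "vb_eq n ((A@B)@C) ((C@B@A@winv C)@C)"
  proof -
    have "vb_eq n ((A@B)@C) (C@B@A)" using h by simp
    also have "vb_eq n (C@B@A) ((C@B@A@winv C)@C)"
      using vb_eq.sym[OF del_l[of n "C@B@A" C "[]"]] by simp
    finally show ?thesis .
  qed
  then have "vb_eq n (A@B) (C@B@A@winv C)" by (rule rcancel)
  then show ?thesis using E_ctx[of n "A@B" "C@B@A@winv C" "winv B" "[]"] by simp
qed

lemma G2b: assumes h: "vb_eq n (A@B@C) (C@B@A)"
  shows "vb_eq n (B @ A @ winv B) (winv C @ A @ B @ C @ winv B)"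
proof -
  have "vb_eq n (C@(B@A)) (C@(winv C @ A @ B @ C))"
  proof -
    have "vb_eq n (C@(B@A)) (A@B@C)" using vb_eq.sym[OF h] by simp
    also have "vb_eq n (A@B@C) (C@(winv C @ A @ B @ C))"
      using vb_eq.sym[OF del_r[of n "[]" C "A@B@C"]] by simp
    finally show ?thesis .
  qed
  then have "vb_eq n (B@A) (winv C @ A @ B @ C)" by (rule lcancel)
  then show ?thesis using E_ctx[of n "B@A" "winv C @ A @ B @ C" "[]" "winv B"] by simp
qed

lemma G3a: assumes h: "vb_eq n (D@C@B) (B@C@D)"
  shows "vb_eq n (winv B @ D @ B) (C @ D @ winv B @ winv C @ B)"
proof -
  have "vb_eq n ((winv B @ D @ B) @ (winv B @ C @ B)) ((C @ D @ winv B @ winv C @ B) @ (winv B @ C @ B))"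
  proof -
    have "vb_eq n ((winv B @ D @ B) @ (winv B @ C @ B)) (winv B @ D @ C @ B)"
      using del_r[of n "winv B @ D" B "C @ B"] by simp
    also have "vb_eq n (winv B @ D @ C @ B) (winv B @ B @ C @ D)"
      using E_ctx[OF h, of "winv B" "[]"] by simp
    also have "vb_eq n (winv B @ B @ C @ D) (C @ D)"
      using del_l[of n "[]" B "C @ D"] by simp
    also have "vb_eq n (C @ D) (C @ D @ winv B @ B)"
      using vb_eq.sym[OF del_l[of n "C @ D" B "[]"]] by simp
    also have "vb_eq n (C @ D @ winv B @ B) (C @ D @ winv B @ winv C @ C @ B)"
      using vb_eq.sym[OF del_l[of n "C @ D @ winv B" C "B"]] by simp
    also have "vb_eq n (C @ D @ winv B @ winv C @ C @ B) ((C @ D @ winv B @ winv C @ B) @ (winv B @ C @ B))"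
      using vb_eq.sym[OF del_r[of n "C @ D @ winv B @ winv C" B "C @ B"]] by simp
    finally show ?thesis .
  qed
  then show ?thesis by (rule rcancel)
qed

lemma G3b: assumes h: "vb_eq n (D@C@B) (B@C@D)"
  shows "vb_eq n (B @ D @ winv B) (B @ winv C @ winv B @ D @ C)"
proof -
  have "vb_eq n ((B@C) @ (D @ winv B)) ((B@C) @ (winv C @ winv B @ D @ C))"
  proof -
    have "vb_eq n ((B@C) @ (D @ winv B)) (D @ C @ B @ winv B)"
      using E_ctx[OF vb_eq.sym[OF h], of "[]" "winv B"] by simp
    also have "vb_eq n (D @ C @ B @ winv B) (D @ C)"
      using del_r[of n "D @ C" B "[]"] by simp
    also have "vb_eq n (D @ C) (B @ C @ winv C @ winv B @ D @ C)"
    proof -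
      have "vb_eq n (B @ C @ winv C @ winv B @ D @ C) (B @ winv B @ D @ C)"
        using del_r[of n B C "winv B @ D @ C"] by simp
      also have "vb_eq n (B @ winv B @ D @ C) (D @ C)"
        using del_r[of n "[]" B "D @ C"] by simp
      finally show ?thesis by (rule vb_eq.sym)
    qed
    finally show ?thesis by simp
  qed
  then have "vb_eq n (D @ winv B) (winv C @ winv B @ D @ C)" by (rule lcancel)
  then show ?thesis using E_ctx[of n _ _ "B" "[]"] by simp
qed

lemma G4a: assumes h1: "vb_eq n (B@A@E) (E@A@B)" and h2: "vb_eq n (A@B@C) (C@B@A)"
  shows "vb_eq n (winv B @ E @ B) (A @ E @ C @ winv A @ winv B @ winv C @ B)"
proof -
  have key: "vb_eq n (winv B @ E @ C @ B) (A @ E @ C @ winv A)"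
  proof -
    have "vb_eq n (B @ (winv B @ E @ C @ B) @ A) (B @ (A @ E @ C @ winv A) @ A)"
    proof -
      have "vb_eq n (B @ (winv B @ E @ C @ B) @ A) (E @ C @ B @ A)"
        using del_r[of n "[]" B "E @ C @ B @ A"] by simp
      also have "vb_eq n (E @ C @ B @ A) (E @ A @ B @ C)"
        using E_ctx[OF vb_eq.sym[OF h2], of E "[]"] by simp
      also have "vb_eq n (E @ A @ B @ C) (B @ A @ E @ C)"
        using E_ctx[OF vb_eq.sym[OF h1], of "[]" C] by simp
      also have "vb_eq n (B @ A @ E @ C) (B @ (A @ E @ C @ winv A) @ A)"
        using vb_eq.sym[OF del_l[of n "B @ A @ E @ C" A "[]"]] by simp
      finally show ?thesis .
    qed
    then show ?thesis by (rule cancel_ctx)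
  qed
  have "vb_eq n ((winv B @ E @ B) @ (winv B @ C @ B)) ((A @ E @ C @ winv A @ winv B @ winv C @ B) @ (winv B @ C @ B))"
  proof -
    have "vb_eq n ((winv B @ E @ B) @ (winv B @ C @ B)) (winv B @ E @ C @ B)"
      using del_r[of n "winv B @ E" B "C @ B"] by simp
    also note key
    also have "vb_eq n (A @ E @ C @ winv A) ((A @ E @ C @ winv A @ winv B @ winv C @ B) @ (winv B @ C @ B))"
    proof -
      have "vb_eq n ((A @ E @ C @ winv A @ winv B @ winv C @ B) @ (winv B @ C @ B)) (A @ E @ C @ winv A @ winv B @ winv C @ C @ B)"
        using del_r[of n "A @ E @ C @ winv A @ winv B @ winv C" B "C @ B"] by simp
      also have "vb_eq n (A @ E @ C @ winv A @ winv B @ winv C @ C @ B) (A @ E @ C @ winv A @ winv B @ B)"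
        using del_l[of n "A @ E @ C @ winv A @ winv B" C "B"] by simp
      also have "vb_eq n (A @ E @ C @ winv A @ winv B @ B) (A @ E @ C @ winv A)"
        using del_l[of n "A @ E @ C @ winv A" B "[]"] by simp
      finally show ?thesis by (rule vb_eq.sym)
    qed
    finally show ?thesis .
  qed
  then show ?thesis by (rule rcancel)
qed

lemma G4b: assumes h1: "vb_eq n (B@A@E) (E@A@B)" and h2: "vb_eq n (A@B@C) (C@B@A)"
  shows "vb_eq n (B @ E @ winv B) (B @ winv C @ winv B @ winv A @ C @ E @ A)"
proof -
  have "vb_eq n ((A@B@C) @ (E @ winv B) @ B) ((A@B@C) @ (winv C @ winv B @ winv A @ C @ E @ A) @ B)"
  proof -
    have "vb_eq n ((A@B@C) @ (E @ winv B) @ B) (A@B@C@E)"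
      using del_l[of n "A@B@C@E" B "[]"] by simp
    also have "vb_eq n (A@B@C@E) (C@B@A@E)"
      using E_ctx[OF h2, of "[]" E] by simp
    also have "vb_eq n (C@B@A@E) (C@E@A@B)"
      using E_ctx[OF h1, of C "[]"] by simp
    also have "vb_eq n (C@E@A@B) ((A@B@C) @ (winv C @ winv B @ winv A @ C @ E @ A) @ B)"
    proof -
      have "vb_eq n ((A@B@C) @ (winv C @ winv B @ winv A @ C @ E @ A) @ B) (A @ B @ winv B @ winv A @ C @ E @ A @ B)"
        using del_r[of n "A@B" C "winv B @ winv A @ C @ E @ A @ B"] by simp
      also have "vb_eq n (A @ B @ winv B @ winv A @ C @ E @ A @ B) (A @ winv A @ C @ E @ A @ B)"
        using del_r[of n "A" B "winv A @ C @ E @ A @ B"] by simp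
      also have "vb_eq n (A @ winv A @ C @ E @ A @ B) (C @ E @ A @ B)"
        using del_r[of n "[]" A "C @ E @ A @ B"] by simp
      finally show ?thesis by (rule vb_eq.sym)
    qed
    finally show ?thesis .
  qed
  then have "vb_eq n (E @ winv B) (winv C @ winv B @ winv A @ C @ E @ A)" by (rule cancel_ctx)
  then show ?thesis using E_ctx[of n _ _ "B" "[]"] by simp
qed


definition rw :: "nat list \<Rightarrow> word" where "rw ks = map (\<lambda>k. (R k, False)) ks"
lemma rw_simps[simp]: "rw [] = []" "rw (k # ks) = rh k @ rw ks" "rw (xs @ ys) = rw xs @ rw ys"
  by (auto simp: rw_def rh_def)

definition idx :: "gen \<times> bool \<Rightarrow> nat" where
  "idx x = (case fst x of S m \<Rightarrow> m | R m \<Rightarrow> m)"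

abbreviation far :: "nat \<Rightarrow> nat \<Rightarrow> bool" where "far k m \<equiv> k + 2 \<le> m \<or> m + 2 \<le> k"

lemma rr: "1 \<le> k \<Longrightarrow> k + 1 \<le> n \<Longrightarrow> vb_eq n (rh k @ rh k) []"
  by (rule vb_eq.rel) (simp add: vb_rels_def rh_def sg_def; arith)
lemma rcomm: "1 \<le> k \<Longrightarrow> k + 1 \<le> n \<Longrightarrow> 1 \<le> m \<Longrightarrow> m + 1 \<le> n \<Longrightarrow> far k m \<Longrightarrow>
   vb_eq n (rh k @ rh m) (rh m @ rh k)"
  by (rule vb_eq.rel) (simp add: vb_rels_def rh_def sg_def; arith)
lemma srcomm: "1 \<le> k \<Longrightarrow> k + 1 \<le> n \<Longrightarrow> 1 \<le> m \<Longrightarrow> m + 1 \<le> n \<Longrightarrow> far k m \<Longrightarrow>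
   vb_eq n (sg m @ rh k) (rh k @ sg m)"
  by (rule vb_eq.rel) (simp add: vb_rels_def rh_def sg_def; arith)
lemma rbraid: "1 \<le> k \<Longrightarrow> k + 2 \<le> n \<Longrightarrow>
   vb_eq n (rh k @ rh (k+1) @ rh k) (rh (k+1) @ rh k @ rh (k+1))"
  by (rule vb_eq.rel) (simp add: vb_rels_def rh_def sg_def; arith)
lemma sbraid: "1 \<le> k \<Longrightarrow> k + 2 \<le> n \<Longrightarrow>
   vb_eq n (sg k @ sg (k+1) @ sg k) (sg (k+1) @ sg k @ sg (k+1))"
  by (rule vb_eq.rel) (simp add: vb_rels_def rh_def sg_def; arith)
lemma mixed: "1 \<le> k \<Longrightarrow> k + 2 \<le> n \<Longrightarrow>
   vb_eq n (rh k @ rh (k+1) @ sg k) (sg (k+1) @ rh k @ rh (k+1))"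
  by (rule vb_eq.rel) (simp add: vb_rels_def rh_def sg_def; arith)

lemma rr_ctx: "1 \<le> k \<Longrightarrow> k + 1 \<le> n \<Longrightarrow> vb_eq n (a @ rh k @ rh k @ b) (a @ b)"
  using E_ctx[OF rr, of k n a b] by simp

lemma rinv: assumes "1 \<le> k" "k + 1 \<le> n" shows "vb_eq n (winv (rh k)) (rh k)"
proof -
  have "vb_eq n (winv (rh k)) (winv (rh k) @ rh k @ rh k)"
    using vb_eq.sym[OF rr_ctx[OF assms, of "winv (rh k)" "[]"]] by simp
  also have "vb_eq n (winv (rh k) @ rh k @ rh k) (rh k)"
    using del_l[of n "[]" "rh k" "rh k"] by simp
  finally show ?thesis .
qed

lemma comm_inv: assumes "vb_eq n (x @ y) (y @ x)" shows "vb_eq n (winv x @ y) (y @ winv x)"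
proof -
  have "vb_eq n (winv x @ y) (winv x @ (y @ x) @ winv x)"
    using vb_eq.sym[OF del_r[of n "winv x @ y" x "[]"]] by simp
  also have "vb_eq n (winv x @ (y @ x) @ winv x) (winv x @ (x @ y) @ winv x)"
    by (rule E_ctx[OF vb_eq.sym[OF assms]])
  also have "vb_eq n (winv x @ (x @ y) @ winv x) (y @ winv x)"
    using del_l[of n "[]" x "y @ winv x"] by simp
  finally show ?thesis .
qed

lemma comm_letter:
  assumes k: "1 \<le> k" "k + 1 \<le> n" and m: "1 \<le> idx x" "idx x + 1 \<le> n" and f: "far k (idx x)"
  shows "vb_eq n (rh k @ [x]) ([x] @ rh k)"
proof -
  obtain g e where x: "x = (g, e)" by (cases x)
  show ?thesis
  proof (cases g)
    case (S m)
    have mm: "idx x = m" by (simp add: idx_def x S)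
    have c: "vb_eq n (sg m @ rh k) (rh k @ sg m)" using srcomm[OF k] m f mm by simp
    show ?thesis
    proof (cases e)
      case True
      have "vb_eq n (winv (sg m) @ rh k) (rh k @ winv (sg m))" by (rule comm_inv[OF c])
      from vb_eq.sym[OF this] show ?thesis by (simp add: x S True sg_def)
    next
      case False
      then show ?thesis using vb_eq.sym[OF c] by (simp add: x S sg_def)
    qed
  next
    case (R m)
    have mm: "idx x = m" by (simp add: idx_def x R)
    have c: "vb_eq n (rh m @ rh k) (rh k @ rh m)" using rcomm[of m n k] k m f mm by (simp; arith)
    show ?thesis
    proof (cases e)
      case True
      have "vb_eq n (winv (rh m) @ rh k) (rh k @ winv (rh m))" by (rule comm_inv[OF c])
      from vb_eq.sym[OF this] show ?thesis by (simp add: x R True rh_def)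
    next
      case False
      then show ?thesis using vb_eq.sym[OF c] by (simp add: x R rh_def)
    qed
  qed
qed

lemma comm_word:
  assumes k: "1 \<le> k" "k + 1 \<le> n"
    and w: "\<forall>x\<in>set w. 1 \<le> idx x \<and> idx x + 1 \<le> n \<and> far k (idx x)"
  shows "vb_eq n (rh k @ w) (w @ rh k)"
  using w
proof (induction w)
  case Nil then show ?case by (simp add: vb_eq.refl)
next
  case (Cons x w)
  have "vb_eq n (rh k @ [x] @ w) ([x] @ rh k @ w)"
    using E_ctx[OF comm_letter[OF k, of x], of "[]" w] Cons.prems by simp
  also have "vb_eq n ([x] @ rh k @ w) ([x] @ w @ rh k)"
    using E_ctx[OF Cons.IH, of "[x]" "[]"] Cons.prems by simp
  finally show ?case by simp
qed

lemma set_rw: "x \<in> set (rw ks) \<Longrightarrow> idx x \<in> set ks"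
  by (auto simp: rw_def idx_def)

lemma rw_cancel:
  assumes "\<forall>m\<in>set ks. 1 \<le> m \<and> m + 1 \<le> n"
  shows "vb_eq n (rw (rev ks) @ rw ks) []" "vb_eq n (rw ks @ rw (rev ks)) []"
  using assms
proof (induction ks)
  case Nil
  { case 1 show ?case by (simp add: vb_eq.refl) }
  { case 2 show ?case by (simp add: vb_eq.refl) }
next
  case (Cons k ks)
  { case 1
    have "vb_eq n (rw (rev ks) @ rh k @ rh k @ rw ks) (rw (rev ks) @ rw ks)"
      using rr_ctx 1 by simp
    also have "vb_eq n (rw (rev ks) @ rw ks) []" using Cons 1 by simp
    finally show ?case by simp }
  { case 2
    have "vb_eq n (rh k @ (rw ks @ rw (rev ks)) @ rh k) (rh k @ [] @ rh k)"
      using E_ctx[OF Cons.IH(2)] 2 by simp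
    also have "vb_eq n (rh k @ [] @ rh k) []" using rr 2 by simp
    finally show ?case by simp }
qed


lemma comm_rw:
  assumes k: "1 \<le> k" "k + 1 \<le> n" and ks: "\<forall>m\<in>set ks. 1 \<le> m \<and> m + 1 \<le> n \<and> far k m"
  shows "vb_eq n (rh k @ rw ks) (rw ks @ rh k)"
  by (rule comm_word[OF k]) (use ks set_rw in blast)

lemma upt_split3: "a \<le> k \<Longrightarrow> k + 1 \<le> b \<Longrightarrow> [a..<b+1] = [a..<k] @ [k, k+1] @ [k+2..<b+1]"
proof -
  assume "a \<le> k" "k + 1 \<le> b"
  then have "[a..<b+1] = [a..<k] @ [k..<b+1]" using upt_add_eq_append[of a k "b+1-k"] by simp
  also have "[k..<b+1] = [k, k+1] @ [k+2..<b+1]" using \<open>k + 1 \<le> b\<close> by (simp add: upt_conv_Cons)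
  finally show ?thesis .
qed

lemma shiftL:
  assumes "1 \<le> a" "a \<le> k" "k + 1 \<le> b" "b + 1 \<le> n"
  shows "vb_eq n (rh k @ rw (rev [a..<b+1])) (rw (rev [a..<b+1]) @ rh (k+1))"
proof -
  let ?P = "rw (rev [k+2..<b+1])" and ?Q = "rw (rev [a..<k])"
  have e: "rw (rev [a..<b+1]) = ?P @ rh (k+1) @ rh k @ ?Q"
    using upt_split3[of a k b] assms by simp
  have c1: "vb_eq n (rh k @ ?P) (?P @ rh k)"
    by (rule comm_rw) (use assms in auto)
  have c2: "vb_eq n (rh (k+1) @ ?Q) (?Q @ rh (k+1))"
    by (rule comm_rw) (use assms in auto)
  have "vb_eq n (rh k @ ?P @ rh (k+1) @ rh k @ ?Q) (?P @ rh k @ rh (k+1) @ rh k @ ?Q)"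
    using E_ctx[OF c1, of "[]" "rh (k+1) @ rh k @ ?Q"] by simp
  also have "vb_eq n (?P @ rh k @ rh (k+1) @ rh k @ ?Q) (?P @ rh (k+1) @ rh k @ rh (k+1) @ ?Q)"
    using E_ctx[OF rbraid[of k n], of ?P ?Q] assms by simp
  also have "vb_eq n (?P @ rh (k+1) @ rh k @ rh (k+1) @ ?Q) (?P @ rh (k+1) @ rh k @ ?Q @ rh (k+1))"
    using E_ctx[OF c2, of "?P @ rh (k+1) @ rh k" "[]"] by simp
  finally show ?thesis using e by simp
qed

lemma shiftR:
  assumes "1 \<le> a" "a \<le> k" "k + 1 \<le> b" "b + 1 \<le> n"
  shows "vb_eq n (rh (k+1) @ rw [a..<b+1]) (rw [a..<b+1] @ rh k)"
proof -
  let ?P = "rw [k+2..<b+1]" and ?Q = "rw [a..<k]"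
  have e: "rw [a..<b+1] = ?Q @ rh k @ rh (k+1) @ ?P"
    using upt_split3[of a k b] assms by simp
  have c1: "vb_eq n (rh k @ ?P) (?P @ rh k)"
    by (rule comm_rw) (use assms in auto)
  have c2: "vb_eq n (rh (k+1) @ ?Q) (?Q @ rh (k+1))"
    by (rule comm_rw) (use assms in auto)
  have "vb_eq n (rh (k+1) @ ?Q @ rh k @ rh (k+1) @ ?P) (?Q @ rh (k+1) @ rh k @ rh (k+1) @ ?P)"
    using E_ctx[OF c2, of "[]" "rh k @ rh (k+1) @ ?P"] by simp
  also have "vb_eq n (?Q @ rh (k+1) @ rh k @ rh (k+1) @ ?P) (?Q @ rh k @ rh (k+1) @ rh k @ ?P)"
    using E_ctx[OF vb_eq.sym[OF rbraid[of k n]], of ?Q ?P] assms by simp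
  also have "vb_eq n (?Q @ rh k @ rh (k+1) @ rh k @ ?P) (?Q @ rh k @ rh (k+1) @ ?P @ rh k)"
    using E_ctx[OF c1, of "?Q @ rh k @ rh (k+1)" "[]"] by simp
  finally show ?thesis using e by simp
qed

lemma lam_lt: "i < j \<Longrightarrow> lam i j = rw (rev [i+1..<j]) @ rh i @ winv (sg i) @ rw [i+1..<j]"
  by (simp add: lam_def rhos_up_def rw_def rev_map)
lemma lam_gt: "j < i \<Longrightarrow> lam i j = rw (rev [j+1..<i]) @ winv (sg j) @ rh j @ rw [j+1..<i]"
  by (simp add: lam_def rhos_up_def rw_def rev_map)
lemma lam_step_lt: "i < j \<Longrightarrow> lam i (j+1) = rh j @ lam i j @ rh j"
  by (simp add: lam_lt)
lemma lam_step_gt: "j < i \<Longrightarrow> lam (i+1) j = rh i @ lam i j @ rh i"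
  by (simp add: lam_gt)

lemma lam_idx: "i \<noteq> j \<Longrightarrow> x \<in> set (lam i j) \<Longrightarrow> min i j \<le> idx x \<and> idx x < max i j"
  apply (cases "i < j")
   apply (auto simp: lam_lt lam_gt idx_def rh_def sg_def winv_def dest!: set_rw)
  done


context
  fixes n a :: nat
  assumes a: "1 \<le> a" "a + 2 \<le> n"
begin

lemma NN: "vb_eq n (winv (sg a) @ rh (a+1) @ rh a) (rh (a+1) @ rh a @ winv (sg (a+1)))"
proof -
  have "vb_eq n (winv (rh a @ rh (a+1) @ sg a)) (winv (sg (a+1) @ rh a @ rh (a+1)))"
    by (rule E_inv[OF mixed]) (use a in auto)
  then have 1: "vb_eq n (winv (sg a) @ winv (rh (a+1)) @ winv (rh a)) (winv (rh (a+1)) @ winv (rh a) @ winv (sg (a+1)))"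
    by simp
  have ra: "vb_eq n (winv (rh a)) (rh a)" by (rule rinv) (use a in auto)
  have rb: "vb_eq n (winv (rh (a+1))) (rh (a+1))" by (rule rinv) (use a in auto)
  have "vb_eq n (winv (sg a) @ rh (a+1) @ rh a) (winv (sg a) @ winv (rh (a+1)) @ winv (rh a))"
    by (intro E_app vb_eq.refl vb_eq.sym[OF ra] vb_eq.sym[OF rb])
  also note 1
  also have "vb_eq n (winv (rh (a+1)) @ winv (rh a) @ winv (sg (a+1))) (rh (a+1) @ rh a @ winv (sg (a+1)))"
    by (intro E_app vb_eq.refl ra rb)
  finally show ?thesis .
qed

lemma TT: "vb_eq n (winv (sg (a+1))) (rh a @ rh (a+1) @ winv (sg a) @ rh (a+1) @ rh a)"
proof -
  have "vb_eq n (winv (sg (a+1))) (rh a @ rh (a+1) @ rh (a+1) @ rh a @ winv (sg (a+1)))"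
  proof -
    have "vb_eq n (rh a @ rh (a+1) @ rh (a+1) @ rh a @ winv (sg (a+1))) (rh a @ rh a @ winv (sg (a+1)))"
      using rr_ctx[of "a+1" n "rh a" "rh a @ winv (sg (a+1))"] a by simp
    also have "vb_eq n (rh a @ rh a @ winv (sg (a+1))) (winv (sg (a+1)))"
      using rr_ctx[of a n "[]" "winv (sg (a+1))"] a by simp
    finally show ?thesis by (rule vb_eq.sym)
  qed
  also have "vb_eq n (rh a @ rh (a+1) @ rh (a+1) @ rh a @ winv (sg (a+1))) (rh a @ rh (a+1) @ winv (sg a) @ rh (a+1) @ rh a)"
    using E_ctx[OF vb_eq.sym[OF NN], of "rh a @ rh (a+1)" "[]"] by simp
  finally show ?thesis .
qed

lemma RB: "vb_eq n (rh a @ rh (a+1) @ rh a) (rh (a+1) @ rh a @ rh (a+1))"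
  by (rule rbraid) (use a in auto)

lemma L1: "vb_eq n (rh a @ rh (a+1) @ winv (sg (a+1)) @ rh a) (rh (a+1) @ rh a @ winv (sg a) @ rh (a+1))"
proof -
  let ?p = "rh a" and ?q = "rh (a+1)" and ?s = "winv (sg a)"
  have "vb_eq n (?p @ ?q @ winv (sg (a+1)) @ ?p) (?p @ ?q @ (?p @ ?q @ ?s @ ?q @ ?p) @ ?p)"
    using E_ctx[OF TT, of "?p @ ?q" "?p"] by simp
  also have "vb_eq n (?p @ ?q @ (?p @ ?q @ ?s @ ?q @ ?p) @ ?p) (?p @ ?q @ ?p @ ?q @ ?s @ ?q)"
    using rr_ctx[of a n "?p @ ?q @ ?p @ ?q @ ?s @ ?q" "[]"] a by simp
  also have "vb_eq n (?p @ ?q @ ?p @ ?q @ ?s @ ?q) (?q @ ?p @ ?q @ ?q @ ?s @ ?q)"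
    using E_ctx[OF RB, of "[]" "?q @ ?s @ ?q"] by simp
  also have "vb_eq n (?q @ ?p @ ?q @ ?q @ ?s @ ?q) (?q @ ?p @ ?s @ ?q)"
    using rr_ctx[of "a+1" n "?q @ ?p" "?s @ ?q"] a by simp
  finally show ?thesis .
qed

lemma L2: "vb_eq n (rh a @ rh (a+1) @ rh a @ winv (sg a) @ rh (a+1) @ rh a) (rh (a+1) @ winv (sg (a+1)))"
proof -
  let ?p = "rh a" and ?q = "rh (a+1)" and ?s = "winv (sg a)"
  have "vb_eq n (?q @ winv (sg (a+1))) (?q @ (?p @ ?q @ ?s @ ?q @ ?p) @ [])"
    using E_ctx[OF TT, of ?q "[]"] by simp
  also have "vb_eq n (?q @ (?p @ ?q @ ?s @ ?q @ ?p) @ []) (?p @ ?q @ ?p @ ?s @ ?q @ ?p)"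
    using E_ctx[OF vb_eq.sym[OF RB], of "[]" "?s @ ?q @ ?p"] by simp
  finally show ?thesis by (rule vb_eq.sym)
qed

lemma L3: "vb_eq n (rh a @ winv (sg (a+1)) @ rh (a+1) @ rh a) (rh (a+1) @ winv (sg a) @ rh a @ rh (a+1))"
proof -
  let ?p = "rh a" and ?q = "rh (a+1)" and ?s = "winv (sg a)"
  have "vb_eq n (?p @ winv (sg (a+1)) @ ?q @ ?p) (?p @ (?p @ ?q @ ?s @ ?q @ ?p) @ ?q @ ?p)"
    by (rule E_ctx[OF TT])
  also have "vb_eq n (?p @ (?p @ ?q @ ?s @ ?q @ ?p) @ ?q @ ?p) (?q @ ?s @ ?q @ ?p @ ?q @ ?p)"
    using rr_ctx[of a n "[]" "?q @ ?s @ ?q @ ?p @ ?q @ ?p"] a by simp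
  also have "vb_eq n (?q @ ?s @ ?q @ ?p @ ?q @ ?p) (?q @ ?s @ ?p @ ?q @ ?p @ ?p)"
    using E_ctx[OF vb_eq.sym[OF RB], of "?q @ ?s" "?p"] by simp
  also have "vb_eq n (?q @ ?s @ ?p @ ?q @ ?p @ ?p) (?q @ ?s @ ?p @ ?q)"
    using rr_ctx[of a n "?q @ ?s @ ?p @ ?q" "[]"] a by simp
  finally show ?thesis .
qed

lemma L4: "vb_eq n (rh a @ rh (a+1) @ winv (sg a) @ rh a @ rh (a+1) @ rh a) (winv (sg (a+1)) @ rh (a+1))"
proof -
  let ?p = "rh a" and ?q = "rh (a+1)" and ?s = "winv (sg a)"
  have "vb_eq n (winv (sg (a+1)) @ ?q) ([] @ (?p @ ?q @ ?s @ ?q @ ?p) @ ?q)"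
    using E_ctx[OF TT, of "[]" ?q] by simp
  also have "vb_eq n ([] @ (?p @ ?q @ ?s @ ?q @ ?p) @ ?q) (?p @ ?q @ ?s @ ?p @ ?q @ ?p)"
    using E_ctx[OF vb_eq.sym[OF RB], of "?p @ ?q @ ?s" "[]"] by simp
  finally show ?thesis by (rule vb_eq.sym)
qed

end

lemma through:
  assumes c1: "vb_eq n (rh k @ P) (P @ rh k)" and c2: "vb_eq n (rh k @ P') (P' @ rh k)"
    and h: "vb_eq n (rh k @ Y @ rh k) Y'"
  shows "vb_eq n (rh k @ (P @ Y @ P') @ rh k) (P @ Y' @ P')"
proof -
  have "vb_eq n (rh k @ (P @ Y @ P') @ rh k) (P @ rh k @ Y @ P' @ rh k)"
    using E_ctx[OF c1, of "[]" "Y @ P' @ rh k"] by simp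
  also have "vb_eq n (P @ rh k @ Y @ P' @ rh k) (P @ rh k @ Y @ rh k @ P')"
    using E_ctx[OF vb_eq.sym[OF c2], of "P @ rh k @ Y" "[]"] by simp
  also have "vb_eq n (P @ rh k @ Y @ rh k @ P') (P @ Y' @ P')"
    using E_ctx[OF h, of P P'] by simp
  finally show ?thesis .
qed

lemma through_shift:
  assumes k: "1 \<le> k" "k + 1 \<le> n"
    and sh1: "vb_eq n (rh k @ Rv) (Rv @ rh (k+1))" and cx: "vb_eq n (rh (k+1) @ X) (X @ rh (k+1))"
    and sh2: "vb_eq n (rh (k+1) @ Rf) (Rf @ rh k)"
  shows "vb_eq n (rh k @ (Rv @ X @ Rf) @ rh k) (Rv @ X @ Rf)"
proof -
  have "vb_eq n (rh k @ (Rv @ X @ Rf) @ rh k) (Rv @ rh (k+1) @ X @ Rf @ rh k)"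
    using E_ctx[OF sh1, of "[]" "X @ Rf @ rh k"] by simp
  also have "vb_eq n (Rv @ rh (k+1) @ X @ Rf @ rh k) (Rv @ X @ rh (k+1) @ Rf @ rh k)"
    using E_ctx[OF cx, of Rv "Rf @ rh k"] by simp
  also have "vb_eq n (Rv @ X @ rh (k+1) @ Rf @ rh k) (Rv @ X @ Rf @ rh k @ rh k)"
    using E_ctx[OF sh2, of "Rv @ X" "rh k"] by simp
  also have "vb_eq n (Rv @ X @ Rf @ rh k @ rh k) (Rv @ X @ Rf)"
    using rr_ctx[OF k, of "Rv @ X @ Rf" "[]"] by simp
  finally show ?thesis .
qed

lemma conj_far:
  assumes k: "1 \<le> k" "k + 1 \<le> n" and ij: "1 \<le> i" "1 \<le> j" "i \<le> n" "j \<le> n" "i \<noteq> j"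
    and f: "k + 2 \<le> min i j \<or> max i j + 1 \<le> k"
  shows "vb_eq n (rh k @ lam i j @ rh k) (lam i j)"
proof -
  have c: "vb_eq n (rh k @ lam i j) (lam i j @ rh k)"
  proof (rule comm_word[OF k], rule ballI)
    fix x assume "x \<in> set (lam i j)"
    from lam_idx[OF ij(5) this] show "1 \<le> idx x \<and> idx x + 1 \<le> n \<and> far k (idx x)"
      using ij f by auto
  qed
  have "vb_eq n (rh k @ lam i j @ rh k) (lam i j @ rh k @ rh k)"
    using E_ctx[OF c, of "[]" "rh k"] by simp
  also have "vb_eq n (lam i j @ rh k @ rh k) (lam i j)"
    using rr_ctx[OF k, of "lam i j" "[]"] by simp
  finally show ?thesis .
qed


definition sw :: "nat \<Rightarrow> nat \<Rightarrow> nat" where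
  "sw k x = (if x = k then k+1 else if x = k+1 then k else x)"

lemma conj_lt:
  assumes k: "1 \<le> k" "k+1 \<le> n" and ij: "1 \<le> i" "i < j" "j \<le> n"
  shows "vb_eq n (rh k @ lam i j @ rh k) (lam (sw k i) (sw k j))"
proof -
  consider "k + 2 \<le> i \<or> j + 1 \<le> k" | "k + 1 = i" | "k = i" "j = i+1" | "k = i" "i+2 \<le> j"
    | "i+1 \<le> k" "k+2 \<le> j" | "k+1 = j" "i+1 \<le> k" | "k = j" by linarith
  then show ?thesis
  proof cases
    case 1
    then have "sw k i = i" "sw k j = j" using ij by (auto simp: sw_def)
    then show ?thesis using conj_far[OF k, of i j] ij 1 by simp
  next
    case 2
    have s: "sw k i = k" "sw k j = j" using 2 ij by (auto simp: sw_def)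
    let ?P = "rw (rev [k+2..<j])" and ?P' = "rw [k+2..<j]"
    have e1: "lam i j = ?P @ (rh (k+1) @ winv (sg (k+1))) @ ?P'" using 2 ij by (simp add: lam_lt)
    have e2: "lam k j = ?P @ (rh (k+1) @ rh k @ winv (sg k) @ rh (k+1)) @ ?P'"
      using 2 ij by (simp add: lam_lt upt_conv_Cons)
    have c1: "vb_eq n (rh k @ ?P) (?P @ rh k)" by (rule comm_rw) (use k ij in auto)
    have c2: "vb_eq n (rh k @ ?P') (?P' @ rh k)" by (rule comm_rw) (use k ij in auto)
    have h: "vb_eq n (rh k @ (rh (k+1) @ winv (sg (k+1))) @ rh k) (rh (k+1) @ rh k @ winv (sg k) @ rh (k+1))"
      using L1[of k n] k 2 ij by simp
    show ?thesis using through[OF c1 c2 h] e1 e2 s by simp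
  next
    case 3
    have s: "sw k i = i+1" "sw k j = i" using 3 by (auto simp: sw_def)
    have e1: "lam i j = rh i @ winv (sg i)" using 3 by (simp add: lam_lt)
    have e2: "lam (i+1) i = winv (sg i) @ rh i" by (simp add: lam_gt)
    show ?thesis using rr_ctx[of i n "[]" "winv (sg i) @ rh i"] k 3 e1 e2 s by simp
  next
    case 4
    have s: "sw k i = i+1" "sw k j = j" using 4 by (auto simp: sw_def)
    let ?P = "rw (rev [i+2..<j])" and ?P' = "rw [i+2..<j]"
    have e1: "lam i j = ?P @ (rh (i+1) @ rh i @ winv (sg i) @ rh (i+1)) @ ?P'"
      using 4 by (simp add: lam_lt upt_conv_Cons)
    have e2: "lam (i+1) j = ?P @ (rh (i+1) @ winv (sg (i+1))) @ ?P'" using 4 by (simp add: lam_lt)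
    have c1: "vb_eq n (rh k @ ?P) (?P @ rh k)" by (rule comm_rw) (use k ij 4 in auto)
    have c2: "vb_eq n (rh k @ ?P') (?P' @ rh k)" by (rule comm_rw) (use k ij 4 in auto)
    have h: "vb_eq n (rh k @ (rh (i+1) @ rh i @ winv (sg i) @ rh (i+1)) @ rh k) (rh (i+1) @ winv (sg (i+1)))"
      using L2[of i n] k 4 ij by simp
    show ?thesis using through[OF c1 c2 h] e1 e2 s by simp
  next
    case 5
    have s: "sw k i = i" "sw k j = j" using 5 by (auto simp: sw_def)
    have jj: "j = (j - 1) + 1" using 5 by simp
    let ?Rv = "rw (rev [i+1..<(j-1)+1])" and ?Rf = "rw [i+1..<(j-1)+1]" and ?X = "rh i @ winv (sg i)"
    have e: "lam i j = ?Rv @ ?X @ ?Rf" using ij jj by (simp add: lam_lt)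
    have sh1: "vb_eq n (rh k @ ?Rv) (?Rv @ rh (k+1))" by (rule shiftL) (use 5 ij in auto)
    have sh2: "vb_eq n (rh (k+1) @ ?Rf) (?Rf @ rh k)" by (rule shiftR) (use 5 ij in auto)
    have cx: "vb_eq n (rh (k+1) @ ?X) (?X @ rh (k+1))"
      by (rule comm_word) (use 5 ij in \<open>auto simp: rh_def sg_def winv_def idx_def\<close>)
    show ?thesis using through_shift[OF k sh1 cx sh2] e s by simp
  next
    case 6
    have s: "sw k i = i" "sw k j = k" using 6 by (auto simp: sw_def)
    have e: "lam i j = rh k @ lam i k @ rh k" using lam_step_lt[of i k] 6 by simp
    have "vb_eq n (rh k @ rh k @ lam i k @ rh k @ rh k) (lam i k @ rh k @ rh k)"
      using rr_ctx[OF k, of "[]" "lam i k @ rh k @ rh k"] by simp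
    also have "vb_eq n (lam i k @ rh k @ rh k) (lam i k)"
      using rr_ctx[OF k, of "lam i k" "[]"] by simp
    finally show ?thesis using e s by simp
  next
    case 7
    have s: "sw k i = i" "sw k j = j + 1" using 7 ij by (auto simp: sw_def)
    show ?thesis using s lam_step_lt[of i j] ij 7 by (simp add: vb_eq.refl)
  qed
qed

lemma conj_gt:
  assumes k: "1 \<le> k" "k+1 \<le> n" and ij: "1 \<le> j" "j < i" "i \<le> n"
  shows "vb_eq n (rh k @ lam i j @ rh k) (lam (sw k i) (sw k j))"
proof -
  consider "k + 2 \<le> j \<or> i + 1 \<le> k" | "k + 1 = j" | "k = j" "i = j+1" | "k = j" "j+2 \<le> i"
    | "j+1 \<le> k" "k+2 \<le> i" | "k+1 = i" "j+1 \<le> k" | "k = i" by linarith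
  then show ?thesis
  proof cases
    case 1
    then have "sw k i = i" "sw k j = j" using ij by (auto simp: sw_def)
    then show ?thesis using conj_far[OF k, of i j] ij 1 by simp
  next
    case 2
    have s: "sw k i = i" "sw k j = k" using 2 ij by (auto simp: sw_def)
    let ?P = "rw (rev [k+2..<i])" and ?P' = "rw [k+2..<i]"
    have e1: "lam i j = ?P @ (winv (sg (k+1)) @ rh (k+1)) @ ?P'" using 2 ij by (simp add: lam_gt)
    have e2: "lam i k = ?P @ (rh (k+1) @ winv (sg k) @ rh k @ rh (k+1)) @ ?P'"
      using 2 ij by (simp add: lam_gt upt_conv_Cons)
    have c1: "vb_eq n (rh k @ ?P) (?P @ rh k)" by (rule comm_rw) (use k ij in auto)
    have c2: "vb_eq n (rh k @ ?P') (?P' @ rh k)" by (rule comm_rw) (use k ij in auto)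
    have h: "vb_eq n (rh k @ (winv (sg (k+1)) @ rh (k+1)) @ rh k) (rh (k+1) @ winv (sg k) @ rh k @ rh (k+1))"
      using L3[of k n] k 2 ij by simp
    show ?thesis using through[OF c1 c2 h] e1 e2 s by simp
  next
    case 3
    have s: "sw k i = j" "sw k j = j+1" using 3 by (auto simp: sw_def)
    have e1: "lam i j = winv (sg j) @ rh j" using 3 by (simp add: lam_gt)
    have e2: "lam j (j+1) = rh j @ winv (sg j)" by (simp add: lam_lt)
    show ?thesis using rr_ctx[of j n "rh j @ winv (sg j)" "[]"] k 3 e1 e2 s by simp
  next
    case 4
    have s: "sw k i = i" "sw k j = j+1" using 4 by (auto simp: sw_def)
    let ?P = "rw (rev [j+2..<i])" and ?P' = "rw [j+2..<i]"
    have e1: "lam i j = ?P @ (rh (j+1) @ winv (sg j) @ rh j @ rh (j+1)) @ ?P'"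
      using 4 by (simp add: lam_gt upt_conv_Cons)
    have e2: "lam i (j+1) = ?P @ (winv (sg (j+1)) @ rh (j+1)) @ ?P'" using 4 by (simp add: lam_gt)
    have c1: "vb_eq n (rh k @ ?P) (?P @ rh k)" by (rule comm_rw) (use k ij 4 in auto)
    have c2: "vb_eq n (rh k @ ?P') (?P' @ rh k)" by (rule comm_rw) (use k ij 4 in auto)
    have h: "vb_eq n (rh k @ (rh (j+1) @ winv (sg j) @ rh j @ rh (j+1)) @ rh k) (winv (sg (j+1)) @ rh (j+1))"
      using L4[of j n] k 4 ij by simp
    show ?thesis using through[OF c1 c2 h] e1 e2 s by simp
  next
    case 5
    have s: "sw k i = i" "sw k j = j" using 5 by (auto simp: sw_def)
    have ii: "i = (i - 1) + 1" using 5 by simp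
    let ?Rv = "rw (rev [j+1..<(i-1)+1])" and ?Rf = "rw [j+1..<(i-1)+1]" and ?X = "winv (sg j) @ rh j"
    have e: "lam i j = ?Rv @ ?X @ ?Rf" using ij ii by (simp add: lam_gt)
    have sh1: "vb_eq n (rh k @ ?Rv) (?Rv @ rh (k+1))" by (rule shiftL) (use 5 ij in auto)
    have sh2: "vb_eq n (rh (k+1) @ ?Rf) (?Rf @ rh k)" by (rule shiftR) (use 5 ij in auto)
    have cx: "vb_eq n (rh (k+1) @ ?X) (?X @ rh (k+1))"
      by (rule comm_word) (use 5 ij in \<open>auto simp: rh_def sg_def winv_def idx_def\<close>)
    show ?thesis using through_shift[OF k sh1 cx sh2] e s by simp
  next
    case 6
    have s: "sw k i = k" "sw k j = j" using 6 by (auto simp: sw_def)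
    have e: "lam i j = rh k @ lam k j @ rh k" using lam_step_gt[of j k] 6 by simp
    have "vb_eq n (rh k @ rh k @ lam k j @ rh k @ rh k) (lam k j @ rh k @ rh k)"
      using rr_ctx[OF k, of "[]" "lam k j @ rh k @ rh k"] by simp
    also have "vb_eq n (lam k j @ rh k @ rh k) (lam k j)"
      using rr_ctx[OF k, of "lam k j" "[]"] by simp
    finally show ?thesis using e s by simp
  next
    case 7
    have s: "sw k i = i + 1" "sw k j = j" using 7 ij by (auto simp: sw_def)
    show ?thesis using s lam_step_gt[of j i] ij 7 by (simp add: vb_eq.refl)
  qed
qed

lemma conj1:
  assumes k: "1 \<le> k" "k+1 \<le> n" and ij: "i \<in> {1..n}" "j \<in> {1..n}" "i \<noteq> j"
  shows "vb_eq n (rh k @ lam i j @ rh k) (lam (sw k i) (sw k j))"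
proof (cases "i < j")
  case True then show ?thesis using conj_lt[OF k, of i j] ij by auto
next
  case False then show ?thesis using conj_gt[OF k, of j i] ij by auto
qed


fun Fp :: "nat list \<Rightarrow> nat \<Rightarrow> nat" where
  "Fp [] x = x"
| "Fp (k # ks) x = Fp ks (sw k x)"

lemma Fp_append: "Fp (xs @ ys) x = Fp ys (Fp xs x)"
  by (induction xs arbitrary: x) auto

lemma Fp_upt: "p \<le> x \<Longrightarrow> Fp [p..<x] y = (if y = p then x else if p < y \<and> y \<le> x then y - 1 else y)"
proof (induction x)
  case 0 then show ?case by simp
next
  case (Suc x)
  show ?case
  proof (cases "p \<le> x")
    case True
    have "[p..<Suc x] = [p..<x] @ [x]" using True by simp
    then show ?thesis using Suc.IH[OF True] True by (auto simp: Fp_append sw_def)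
  next
    case False
    then have "p = Suc x" using Suc.prems by simp
    then show ?thesis by simp
  qed
qed

lemma transport:
  assumes "\<forall>m\<in>set ks. 1 \<le> m \<and> m + 1 \<le> n"
  shows "i \<in> {1..n} \<Longrightarrow> j \<in> {1..n} \<Longrightarrow> i \<noteq> j \<Longrightarrow>
     vb_eq n (rw (rev ks) @ lam i j @ rw ks) (lam (Fp ks i) (Fp ks j))"
  using assms
proof (induction ks arbitrary: i j)
  case Nil then show ?case by (simp add: vb_eq.refl)
next
  case (Cons k ks)
  have k: "1 \<le> k" "k + 1 \<le> n" using Cons.prems by auto
  have r: "sw k i \<in> {1..n}" "sw k j \<in> {1..n}" "sw k i \<noteq> sw k j"
    using Cons.prems k by (auto simp: sw_def)
  have "vb_eq n (rw (rev ks) @ (rh k @ lam i j @ rh k) @ rw ks) (rw (rev ks) @ lam (sw k i) (sw k j) @ rw ks)"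
    by (rule E_ctx[OF conj1[OF k]]) (use Cons.prems in auto)
  also have "vb_eq n (rw (rev ks) @ lam (sw k i) (sw k j) @ rw ks) (lam (Fp ks (sw k i)) (Fp ks (sw k j)))"
    using Cons.IH[OF r] Cons.prems by auto
  finally show ?case by simp
qed

lemma exists_perm:
  "distinct xs \<Longrightarrow> \<forall>y\<in>set xs. b + 1 \<le> y \<and> y \<le> n \<Longrightarrow>
   \<exists>ks. (\<forall>m\<in>set ks. 1 \<le> m \<and> m + 1 \<le> n) \<and> (\<forall>y\<le>b. Fp ks y = y) \<and>
        (\<forall>p<length xs. Fp ks (b + 1 + p) = xs ! p)"
proof (induction "length xs" arbitrary: xs b)
  case 0
  then show ?case by (intro exI[of _ "[]"]) simp
next
  case (Suc m)
  then obtain a ys where xs: "xs = a # ys" by (cases xs) auto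
  have P: "distinct (a # ys)" "\<forall>y\<in>set (a # ys). b + 1 \<le> y \<and> y \<le> n" using Suc.prems xs by auto
  have len: "m = length ys" using Suc.hyps(2) xs by simp
  define ys' where "ys' = map (\<lambda>y. if y < a then y + 1 else y) ys"
  have d: "distinct ys'" unfolding ys'_def using P
    by (auto simp: distinct_map inj_on_def split: if_splits) (metis Suc_lessI)+
  have na: "\<forall>y\<in>set ys. y \<noteq> a \<and> b + 1 \<le> y \<and> y \<le> n \<and> b + 1 \<le> a" using P by auto
  have bd: "\<forall>y\<in>set ys'. (b + 1) + 1 \<le> y \<and> y \<le> n" unfolding ys'_def
  proof
    fix z assume "z \<in> set (map (\<lambda>y. if y < a then y + 1 else y) ys)"
    then obtain y where "y \<in> set ys" "z = (if y < a then y + 1 else y)" by auto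
    with na P show "b + 1 + 1 \<le> z \<and> z \<le> n" by (cases "y < a") auto
  qed
  obtain ks1 where ks1: "\<forall>m\<in>set ks1. 1 \<le> m \<and> m + 1 \<le> n" "\<forall>y\<le>b+1. Fp ks1 y = y"
      "\<forall>p<length ys'. Fp ks1 (b + 1 + 1 + p) = ys' ! p"
    using Suc.hyps(1)[of _ "b+1", OF _ _ bd] d len by (auto simp: ys'_def)
  have ab: "b + 1 \<le> a" "a \<le> n" using P by auto
  show ?case unfolding xs
  proof (rule exI[of _ "ks1 @ [b+1..<a]"], intro conjI)
    show "\<forall>m\<in>set (ks1 @ [b+1..<a]). 1 \<le> m \<and> m + 1 \<le> n" using ks1(1) ab by auto
  next
    show "\<forall>y\<le>b. Fp (ks1 @ [b+1..<a]) y = y" using ks1(2) ab by (simp add: Fp_append Fp_upt)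
  next
    show "\<forall>p<length (a # ys). Fp (ks1 @ [b+1..<a]) (b + 1 + p) = (a # ys) ! p"
    proof (intro allI impI)
    fix p assume p: "p < length (a # ys)"
    show "Fp (ks1 @ [b+1..<a]) (b + 1 + p) = (a # ys) ! p"
    proof (cases p)
      case 0 then show ?thesis using ks1(2) ab by (simp add: Fp_append Fp_upt)
    next
      case (Suc p')
      have p': "p' < length ys" using p Suc by simp
      have y: "ys ! p' \<noteq> a" "b + 1 \<le> ys ! p'" using P p' nth_mem by fastforce+
      have "Fp ks1 (b + 1 + p) = ys' ! p'" using ks1(3) p' Suc by (simp add: ys'_def)
      then show ?thesis using y ab Suc p' by (auto simp: Fp_append Fp_upt ys'_def)
    qed
    qed
  qed
qed


lemma sscomm: "1 \<le> k \<Longrightarrow> k + 1 \<le> n \<Longrightarrow> 1 \<le> m \<Longrightarrow> m + 1 \<le> n \<Longrightarrow> far k m \<Longrightarrow>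
   vb_eq n (sg k @ sg m) (sg m @ sg k)"
  by (rule vb_eq.rel) (simp add: vb_rels_def rh_def sg_def; arith)

lemma R123: assumes n: "3 \<le> n"
  shows "vb_eq n (lam 1 2 @ lam 1 3 @ lam 2 3) (lam 2 3 @ lam 1 3 @ lam 1 2)"
proof -
  let ?p = "rh 1" and ?q = "rh 2" and ?s = "winv (sg 1)" and ?t = "winv (sg 2)"
  have a: "1 \<le> (1::nat)" "1 + 2 \<le> n" using n by auto
  have e12: "lam 1 2 = ?p @ ?s" by (simp add: lam_lt)
  have e13: "lam 1 3 = ?q @ ?p @ ?s @ ?q" by (simp add: lam_lt numeral_eq_Suc)
  have e23: "lam 2 3 = ?q @ ?t" by (simp add: lam_lt numeral_eq_Suc)
  have NN': "vb_eq n (?s @ ?q @ ?p) (?q @ ?p @ ?t)" using NN[OF a] by (simp add: numeral_2_eq_2)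
  have TT': "vb_eq n ?t (?p @ ?q @ ?s @ ?q @ ?p)" using TT[OF a] by (simp add: numeral_2_eq_2)
  have RB': "vb_eq n (?p @ ?q @ ?p) (?q @ ?p @ ?q)" using RB[OF a] by (simp add: numeral_2_eq_2)
  have SB: "vb_eq n (?s @ ?t @ ?s) (?t @ ?s @ ?t)"
    using E_inv[OF sbraid[of 1 n]] n by (simp add: numeral_2_eq_2)
  have T2: "vb_eq n (?t @ ?p @ ?q) (?p @ ?q @ ?s)"
  proof -
    have "vb_eq n (?t @ ?p @ ?q) ([] @ (?p @ ?q @ ?s @ ?q @ ?p) @ ?p @ ?q)"
      using E_ctx[OF TT', of "[]" "?p @ ?q"] by simp
    also have "vb_eq n ([] @ (?p @ ?q @ ?s @ ?q @ ?p) @ ?p @ ?q) (?p @ ?q @ ?s @ ?q @ ?q)"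
      using rr_ctx[of 1 n "?p @ ?q @ ?s @ ?q" "?q"] n by simp
    also have "vb_eq n (?p @ ?q @ ?s @ ?q @ ?q) (?p @ ?q @ ?s)"
      using rr_ctx[of 2 n "?p @ ?q @ ?s" "[]"] n by simp
    finally show ?thesis .
  qed
  have L: "vb_eq n (?p @ ?s @ ?q @ ?p @ ?s @ ?q @ ?q @ ?t) (?p @ ?q @ ?p @ ?t @ ?s @ ?t)"
  proof -
    have "vb_eq n (?p @ ?s @ ?q @ ?p @ ?s @ ?q @ ?q @ ?t) (?p @ ?s @ ?q @ ?p @ ?s @ ?t)"
      using rr_ctx[of 2 n "?p @ ?s @ ?q @ ?p @ ?s" "?t"] n by simp
    also have "vb_eq n (?p @ ?s @ ?q @ ?p @ ?s @ ?t) (?p @ ?q @ ?p @ ?t @ ?s @ ?t)"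
      using E_ctx[OF NN', of ?p "?s @ ?t"] by simp
    finally show ?thesis .
  qed
  have R: "vb_eq n (?q @ ?t @ ?q @ ?p @ ?s @ ?q @ ?p @ ?s) (?p @ ?q @ ?p @ ?t @ ?s @ ?t)"
  proof -
    have "vb_eq n (?q @ ?t @ ?q @ ?p @ ?s @ ?q @ ?p @ ?s) (?q @ ?t @ ?q @ ?p @ ?q @ ?p @ ?t @ ?s)"
      using E_ctx[OF NN', of "?q @ ?t @ ?q @ ?p" ?s] by simp
    also have "vb_eq n (?q @ ?t @ ?q @ ?p @ ?q @ ?p @ ?t @ ?s) (?q @ ?t @ ?p @ ?q @ ?p @ ?p @ ?t @ ?s)"
      using E_ctx[OF vb_eq.sym[OF RB'], of "?q @ ?t" "?p @ ?t @ ?s"] by simp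
    also have "vb_eq n (?q @ ?t @ ?p @ ?q @ ?p @ ?p @ ?t @ ?s) (?q @ ?t @ ?p @ ?q @ ?t @ ?s)"
      using rr_ctx[of 1 n "?q @ ?t @ ?p @ ?q" "?t @ ?s"] n by simp
    also have "vb_eq n (?q @ ?t @ ?p @ ?q @ ?t @ ?s) (?q @ ?p @ ?q @ ?s @ ?t @ ?s)"
      using E_ctx[OF T2, of ?q "?t @ ?s"] by simp
    also have "vb_eq n (?q @ ?p @ ?q @ ?s @ ?t @ ?s) (?p @ ?q @ ?p @ ?s @ ?t @ ?s)"
      using E_ctx[OF vb_eq.sym[OF RB'], of "[]" "?s @ ?t @ ?s"] by simp
    also have "vb_eq n (?p @ ?q @ ?p @ ?s @ ?t @ ?s) (?p @ ?q @ ?p @ ?t @ ?s @ ?t)"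
      using E_ctx[OF SB, of "?p @ ?q @ ?p" "[]"] by simp
    finally show ?thesis .
  qed
  show ?thesis using vb_eq.trans[OF L vb_eq.sym[OF R]] e12 e13 e23 by simp
qed

lemma C1234: assumes n: "4 \<le> n"
  shows "vb_eq n (lam 1 2 @ lam 3 4) (lam 3 4 @ lam 1 2)"
proof -
  let ?p = "rh 1" and ?q = "rh 3" and ?s = "winv (sg 1)" and ?t = "winv (sg 3)"
  have e12: "lam 1 2 = ?p @ ?s" by (simp add: lam_lt)
  have e34: "lam 3 4 = ?q @ ?t" by (simp add: lam_lt numeral_eq_Suc)
  have c1: "vb_eq n (?s @ ?q) (?q @ ?s)"
    by (rule comm_inv) (rule srcomm, use n in auto)
  have c2: "vb_eq n (?t @ ?p) (?p @ ?t)"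
    by (rule comm_inv) (rule srcomm, use n in auto)
  have c3: "vb_eq n (?p @ ?q) (?q @ ?p)"
    by (rule rcomm) (use n in auto)
  have c4: "vb_eq n (?s @ ?t) (?t @ ?s)"
    using E_inv[OF sscomm[of 3 n 1]] n by simp
  have "vb_eq n (?p @ ?s @ ?q @ ?t) (?p @ ?q @ ?s @ ?t)"
    using E_ctx[OF c1, of ?p ?t] by simp
  also have "vb_eq n (?p @ ?q @ ?s @ ?t) (?q @ ?p @ ?s @ ?t)"
    using E_ctx[OF c3, of "[]" "?s @ ?t"] by simp
  also have "vb_eq n (?q @ ?p @ ?s @ ?t) (?q @ ?p @ ?t @ ?s)"
    using E_ctx[OF c4, of "?q @ ?p" "[]"] by simp
  also have "vb_eq n (?q @ ?p @ ?t @ ?s) (?q @ ?t @ ?p @ ?s)"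
    using E_ctx[OF vb_eq.sym[OF c2], of "?q" "?s"] by simp
  finally show ?thesis using e12 e34 by simp
qed

lemma conj_mult:
  assumes W: "vb_eq n (W @ W') []"
  shows "vb_eq n (W' @ (A @ B) @ W) ((W' @ A @ W) @ (W' @ B @ W))"
proof -
  have "vb_eq n ((W' @ A) @ (W @ W') @ (B @ W)) ((W' @ A) @ [] @ (B @ W))" by (rule E_ctx[OF W])
  then show ?thesis by (simp add: vb_eq.sym)
qed

lemma tr2:
  assumes ks: "\<forall>m\<in>set ks. 1 \<le> m \<and> m + 1 \<le> n"
    and p: "i1 \<in> {1..n}" "j1 \<in> {1..n}" "i1 \<noteq> j1" "i2 \<in> {1..n}" "j2 \<in> {1..n}" "i2 \<noteq> j2"
  shows "vb_eq n (rw (rev ks) @ (lam i1 j1 @ lam i2 j2) @ rw ks)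
                 (lam (Fp ks i1) (Fp ks j1) @ lam (Fp ks i2) (Fp ks j2))"
proof -
  have W: "vb_eq n (rw ks @ rw (rev ks)) []" by (rule rw_cancel(2)[OF ks])
  note conj_mult[OF W, of "lam i1 j1" "lam i2 j2"]
  also have "vb_eq n ((rw (rev ks) @ lam i1 j1 @ rw ks) @ (rw (rev ks) @ lam i2 j2 @ rw ks))
                 (lam (Fp ks i1) (Fp ks j1) @ lam (Fp ks i2) (Fp ks j2))"
    by (intro E_app transport[OF ks] p)
  finally show ?thesis .
qed

lemma tr3:
  assumes ks: "\<forall>m\<in>set ks. 1 \<le> m \<and> m + 1 \<le> n"
    and p: "i1 \<in> {1..n}" "j1 \<in> {1..n}" "i1 \<noteq> j1" "i2 \<in> {1..n}" "j2 \<in> {1..n}" "i2 \<noteq> j2"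
      "i3 \<in> {1..n}" "j3 \<in> {1..n}" "i3 \<noteq> j3"
  shows "vb_eq n (rw (rev ks) @ (lam i1 j1 @ lam i2 j2 @ lam i3 j3) @ rw ks)
                 (lam (Fp ks i1) (Fp ks j1) @ lam (Fp ks i2) (Fp ks j2) @ lam (Fp ks i3) (Fp ks j3))"
proof -
  have W: "vb_eq n (rw ks @ rw (rev ks)) []" by (rule rw_cancel(2)[OF ks])
  note conj_mult[OF W, of "lam i1 j1" "lam i2 j2 @ lam i3 j3"]
  also have "vb_eq n ((rw (rev ks) @ lam i1 j1 @ rw ks) @ (rw (rev ks) @ (lam i2 j2 @ lam i3 j3) @ rw ks))
                 (lam (Fp ks i1) (Fp ks j1) @ lam (Fp ks i2) (Fp ks j2) @ lam (Fp ks i3) (Fp ks j3))"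
    by (intro E_app transport[OF ks] tr2[OF ks] p)
  finally show ?thesis .
qed

lemma R_all:
  assumes n: "3 \<le> n" and abc: "a \<in> {1..n}" "b \<in> {1..n}" "c \<in> {1..n}" "distinct [a, b, c]"
  shows "vb_eq n (lam a b @ lam a c @ lam b c) (lam b c @ lam a c @ lam a b)"
proof -
  obtain ks where ks: "\<forall>m\<in>set ks. 1 \<le> m \<and> m + 1 \<le> n" "\<forall>p<length [a,b,c]. Fp ks (0 + 1 + p) = [a,b,c] ! p"
    using exists_perm[of "[a,b,c]" 0 n] abc by auto
  have F: "Fp ks 1 = a" "Fp ks 2 = b" "Fp ks 3 = c"
    using ks(2) by (auto dest: spec[of _ 0] spec[of _ 1] spec[of _ 2] simp: numeral_eq_Suc)
  have r: "(1::nat) \<in> {1..n}" "(2::nat) \<in> {1..n}" "(3::nat) \<in> {1..n}" using n by auto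
  have "vb_eq n (lam a b @ lam a c @ lam b c) (rw (rev ks) @ (lam 1 2 @ lam 1 3 @ lam 2 3) @ rw ks)"
    using vb_eq.sym[OF tr3[OF ks(1), of 1 2 1 3 2 3]] r F by simp
  also have "vb_eq n (rw (rev ks) @ (lam 1 2 @ lam 1 3 @ lam 2 3) @ rw ks) (rw (rev ks) @ (lam 2 3 @ lam 1 3 @ lam 1 2) @ rw ks)"
    by (rule E_ctx[OF R123[OF n]])
  also have "vb_eq n (rw (rev ks) @ (lam 2 3 @ lam 1 3 @ lam 1 2) @ rw ks) (lam b c @ lam a c @ lam a b)"
    using tr3[OF ks(1), of 2 3 1 3 1 2] r F by simp
  finally show ?thesis .
qed

lemma C_all:
  assumes abc: "a \<in> {1..n}" "b \<in> {1..n}" "c \<in> {1..n}" "d \<in> {1..n}" "distinct [a, b, c, d]"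
  shows "vb_eq n (lam a b @ lam c d) (lam c d @ lam a b)"
proof -
  have "card (set [a,b,c,d]) \<le> card {1..n}" by (rule card_mono) (use abc in auto)
  then have n: "4 \<le> n" using abc(5) distinct_card[OF abc(5)] by simp
  obtain ks where ks: "\<forall>m\<in>set ks. 1 \<le> m \<and> m + 1 \<le> n" "\<forall>p<length [a,b,c,d]. Fp ks (0 + 1 + p) = [a,b,c,d] ! p"
    using exists_perm[of "[a,b,c,d]" 0 n] abc by auto
  have F: "Fp ks 1 = a" "Fp ks 2 = b" "Fp ks 3 = c" "Fp ks 4 = d"
    using ks(2) by (auto dest: spec[of _ 0] spec[of _ 1] spec[of _ 2] spec[of _ 3] simp: numeral_eq_Suc)
  have r: "(1::nat) \<in> {1..n}" "(2::nat) \<in> {1..n}" "(3::nat) \<in> {1..n}" "(4::nat) \<in> {1..n}" using n by auto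
  have "vb_eq n (lam a b @ lam c d) (rw (rev ks) @ (lam 1 2 @ lam 3 4) @ rw ks)"
    using vb_eq.sym[OF tr2[OF ks(1), of 1 2 3 4]] r F by simp
  also have "vb_eq n (rw (rev ks) @ (lam 1 2 @ lam 3 4) @ rw ks) (rw (rev ks) @ (lam 3 4 @ lam 1 2) @ rw ks)"
    by (rule E_ctx[OF C1234[OF n]])
  also have "vb_eq n (rw (rev ks) @ (lam 3 4 @ lam 1 2) @ rw ks) (lam c d @ lam a b)"
    using tr2[OF ks(1), of 3 4 1 2] r F by simp
  finally show ?thesis .
qed


theorem lemma5:
  fixes n i j k l :: nat
  assumes "n \<ge> 3"
  shows
   "(i \<in> {1..n} \<and> j \<in> {1..n} \<and> k \<in> {1..n} \<and> l \<in> {1..n} \<and>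
     distinct [i, j, k, l] \<and> max i j < max k l \<longrightarrow>
       vb_eq n (wconj (lam k l) (lam i j)) (lam k l) \<and>
       vb_eq n (wconj (lam k l) (winv (lam i j))) (lam k l))
  \<and> (i \<in> {1..n} \<and> j \<in> {1..n} \<and> k \<in> {1..n} \<and> (i < j \<and> j < k \<or> j < i \<and> i < k) \<longrightarrow>
       vb_eq n (wconj (lam i k) (lam i j))
               (wconj (lam k j) (lam i j) @ lam i k @ winv (lam k j)) \<and>
       vb_eq n (wconj (lam i k) (winv (lam i j)))
               (winv (lam k j) @ lam i k @ wconj (lam k j) (winv (lam i j))) \<and>
       vb_eq n (wconj (lam k i) (lam i j))
               (lam k j @ lam k i @ winv (wconj (lam k j) (lam i j))) \<and>
       vb_eq n (wconj (lam k i) (winv (lam i j)))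
               (winv (wconj (lam k j) (winv (lam i j))) @ lam k i @ lam k j) \<and>
       vb_eq n (wconj (lam j k) (lam i j))
               (lam i k @ lam j k @ lam k j @ winv (lam i k) @ winv (wconj (lam k j) (lam i j))) \<and>
       vb_eq n (wconj (lam j k) (winv (lam i j)))
               (winv (wconj (lam k j) (winv (lam i j))) @ winv (lam i k) @ lam k j @ lam j k @ lam i k))"
proof (intro conjI impI)
  assume h: "i \<in> {1..n} \<and> j \<in> {1..n} \<and> k \<in> {1..n} \<and> l \<in> {1..n} \<and> distinct [i, j, k, l] \<and> max i j < max k l"
  have c: "vb_eq n (lam k l @ lam i j) (lam i j @ lam k l)" using C_all[of k n l i j] h by auto
  have "vb_eq n (winv (lam i j) @ (lam k l @ lam i j) @ []) (winv (lam i j) @ (lam i j @ lam k l) @ [])"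
    by (rule E_ctx[OF c])
  also have "vb_eq n (winv (lam i j) @ (lam i j @ lam k l) @ []) (lam k l)"
    using del_l[of n "[]" "lam i j" "lam k l"] by simp
  finally show "vb_eq n (wconj (lam k l) (lam i j)) (lam k l)" by (simp add: wconj_def)
  have "vb_eq n ([] @ (lam i j @ lam k l) @ winv (lam i j)) ([] @ (lam k l @ lam i j) @ winv (lam i j))"
    by (rule E_ctx[OF vb_eq.sym[OF c]])
  also have "vb_eq n ([] @ (lam k l @ lam i j) @ winv (lam i j)) (lam k l)"
    using del_r[of n "lam k l" "lam i j" "[]"] by simp
  finally show "vb_eq n (wconj (lam k l) (winv (lam i j))) (lam k l)" by (simp add: wconj_def)
next
  assume h: "i \<in> {1..n} \<and> j \<in> {1..n} \<and> k \<in> {1..n} \<and> (i < j \<and> j < k \<or> j < i \<and> i < k)"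
  have d: "distinct [i, j, k]" using h by auto
  have rikj: "vb_eq n (lam i k @ lam i j @ lam k j) (lam k j @ lam i j @ lam i k)"
    using R_all[OF assms, of i k j] h d by auto
  have rkij: "vb_eq n (lam k i @ lam k j @ lam i j) (lam i j @ lam k j @ lam k i)"
    using R_all[OF assms, of k i j] h d by auto
  have rijk: "vb_eq n (lam i j @ lam i k @ lam j k) (lam j k @ lam i k @ lam i j)"
    using R_all[OF assms, of i j k] h d by auto
  show "vb_eq n (wconj (lam i k) (lam i j)) (wconj (lam k j) (lam i j) @ lam i k @ winv (lam k j))"
    using G2a[OF rikj] by (simp add: wconj_def)
  show "vb_eq n (wconj (lam i k) (winv (lam i j))) (winv (lam k j) @ lam i k @ wconj (lam k j) (winv (lam i j)))"
    using G2b[OF rikj] by (simp add: wconj_def)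
  show "vb_eq n (wconj (lam k i) (lam i j)) (lam k j @ lam k i @ winv (wconj (lam k j) (lam i j)))"
    using G3a[OF rkij] by (simp add: wconj_def)
  show "vb_eq n (wconj (lam k i) (winv (lam i j))) (winv (wconj (lam k j) (winv (lam i j))) @ lam k i @ lam k j)"
    using G3b[OF rkij] by (simp add: wconj_def)
  show "vb_eq n (wconj (lam j k) (lam i j)) (lam i k @ lam j k @ lam k j @ winv (lam i k) @ winv (wconj (lam k j) (lam i j)))"
    using G4a[OF rijk rikj] by (simp add: wconj_def)
  show "vb_eq n (wconj (lam j k) (winv (lam i j))) (winv (wconj (lam k j) (winv (lam i j))) @ winv (lam i k) @ lam k j @ lam j k @ lam i k)"
    using G4b[OF rijk rikj] by (simp add: wconj_def)
qed

end
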